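(* Let $P=(p_1,\dots,p_n)$ be a configuration of length $n$. If there exist $i,j\in\{1,\dots,n\}$ such that $p_j=p_i+i$, then $P$ is not unique.
   Context: For a real sequence $A=(a_1,\dots,a_n)$, a configuration is a sequence $P=(p_1,\dots,p_n)$ with $p_\ell\in\{1,\dots,n-\ell+1\}$ for each $\ell$; $P$ is an output configuration for $A$ if for every $\ell=1,\dots,n$ the sum $a_{p_\ell}+\dots+a_{p_\ell+\ell-1}$ is maximum among all sums of $\ell$ consecutive entries of $A$. A configuration $P$ is unique if there exists $A\in\mathbb{R}^n$ whose only output configuration is $P$ (equivalently, for every $\ell$ the block of length $\ell$ starting at $p_\ell$ has sum strictly larger than every other block of length $\ell$). *)

theory Defs
  imports Complex_Main
begin

text \<open>Sequences A = (a_1,...,a_n) are modelled as functions nat => real,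
  only the values at 1..n being relevant.\<close>

definition block_sum :: "(nat \<Rightarrow> real) \<Rightarrow> nat \<Rightarrow> nat \<Rightarrow> real" where
  "block_sum a s l = (\<Sum>k = s..<s + l. a k)"

definition is_configuration :: "nat \<Rightarrow> (nat \<Rightarrow> nat) \<Rightarrow> bool" where
  "is_configuration n p \<longleftrightarrow> (\<forall>l \<in> {1..n}. p l \<in> {1..n - l + 1})"

definition unique_config :: "nat \<Rightarrow> (nat \<Rightarrow> nat) \<Rightarrow> bool" where
  "unique_config n p \<longleftrightarrow>
     (\<exists>a :: nat \<Rightarrow> real. \<forall>l \<in> {1..n}. \<forall>q \<in> {1..n - l + 1}.
        q \<noteq> p l \<longrightarrow> block_sum a q l < block_sum a (p l) l)"

end

theory Submission
  imports Defs
begin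

lemma bs_add: "block_sum a s (x + y) = block_sum a s x + block_sum a (s + x) y"
  unfolding block_sum_def
  by (metis add.assoc le_add1 sum.atLeastLessThan_concat)

theorem proposition1:
  fixes n i j :: nat and p :: "nat \<Rightarrow> nat"
  assumes "is_configuration n p"
    and "i \<in> {1..n}" and "j \<in> {1..n}" and "p j = p i + i"
  shows "\<not> unique_config n p"
proof
  assume "unique_config n p"
  then obtain a :: "nat \<Rightarrow> real" where A: "\<forall>l \<in> {1..n}. \<forall>q \<in> {1..n - l + 1}.
        q \<noteq> p l \<longrightarrow> block_sum a q l < block_sum a (p l) l"
    unfolding unique_config_def by blast
  have le: "block_sum a q l \<le> block_sum a (p l) l" if "l \<in> {1..n}" "q \<in> {1..n - l + 1}" for q l
    using A that by (cases "q = p l") (auto intro: less_imp_le)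
  have pi: "p i \<in> {1..n - i + 1}" and pj: "p j \<in> {1..n - j + 1}"
    using assms(1,2,3) unfolding is_configuration_def by auto
  define k where "k = i + j"
  have kn: "k \<in> {1..n}" using pi pj assms(2,3,4) unfolding k_def by auto
  define m where "m = p k"
  have m: "m \<in> {1..n - k + 1}" using assms(1) kn unfolding is_configuration_def m_def by auto
  have piK: "p i \<in> {1..n - k + 1}" using pi pj assms(2,3,4) unfolding k_def by auto
  have e1: "block_sum a m k = block_sum a m j + block_sum a (m + j) i"
    unfolding k_def by (metis bs_add add.commute)
  have e2: "block_sum a (p i) k = block_sum a (p i) i + block_sum a (p j) j"
    unfolding k_def using bs_add assms(4) by metis
  have mj: "m \<in> {1..n - j + 1}" and mji: "m + j \<in> {1..n - i + 1}"
    using m kn assms(2,3) unfolding k_def by auto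
  have l1: "block_sum a m j \<le> block_sum a (p j) j" using le[OF assms(3) mj] .
  have l2: "block_sum a (m + j) i \<le> block_sum a (p i) i" using le[OF assms(2) mji] .
  have "m \<noteq> p j \<or> m + j \<noteq> p i" using assms(2,4) by auto
  hence "block_sum a m j < block_sum a (p j) j \<or> block_sum a (m + j) i < block_sum a (p i) i"
    using A assms(2,3) mj mji by blast
  hence lt: "block_sum a m k < block_sum a (p i) k" using e1 e2 l1 l2 by linarith
  have "block_sum a (p i) k \<le> block_sum a m k" using le[OF kn piK] unfolding m_def .
  thus False using lt by linarith
qed

end
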